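(* For a directed graph $\vec G$ on $[n]$, let $\vec G_{\mathrm{fwd}}$ be the undirected graph whose edges are the forward edges of $\vec G$. Then: (i) $\mathcal{F}_{\vec G(n,p)}$ has the same distribution as $\mathcal{F}_{G(n,p)}$; (ii) $(\vec G(n,p))_{\mathrm{fwd}}$ has the same distribution as $G(n,p)$; (iii) one can couple $G(n,p)$ and $\vec G(n,p)$ as follows: first sample $G(n,p)$, which gives a depth-first ordering $(v_0,\dots,v_{n-1})$ of $[n]$; then let $\vec G_{\mathrm{fwd}}(n,p)=G(n,p)$ and add to it each of the possible back edges $(v_i,v_j)$, $j<i$, independently with probability $p$.
   Context: $[n]=\{1,\dots,n\}$. $\vec G(n,p)$: each of the $n(n-1)$ directed edges $(i,j)$, $i\ne j$, present independently with probability $p$. $G(n,p)$: each of the $\binom n2$ undirected edges present independently with probability $p$. Depth-first exploration. For a directed graph $\vec G$ (resp. undirected graph $G$) on $[n]$, define inductively for $i=0,\dots,n$ an ordered list $\mathcal O_i$ (open vertices) and a set $\mathcal A_i$ (explored vertices): $\mathcal O_0=(1)$, $\mathcal A_0=\emptyset$. Given $\mathcal O_i,\mathcal A_i$, let $v_i$ be the first element of $\mathcal O_i$, $\mathcal A_{i+1}=\mathcal A_i\cup\{v_i\}$, and $\mathcal N_i$ the set of out-neighbours (resp. neighbours) of $v_i$ not in $\mathcal O_i\cup\mathcal A_i$. $\mathcal O_{i+1}$ is obtained from $\mathcal O_i$ by removing $v_i$ and placing the elements of $\mathcal N_i$ in increasing order at the start (the smallest element of $\mathcal N_i$ becomes first);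 if this gives $\mathcal O_{i+1}=\emptyset$, instead let $\mathcal O_{i+1}$ consist of the smallest element of $[n]\setminus\mathcal A_{i+1}$. The forest $\mathcal F_{\vec G}$ (resp. $\mathcal F_G$) has an edge from $x$ to $y$ iff $x=v_i$ and $y\in\mathcal N_i$ for some $i$. The order $(v_0,\dots,v_{n-1})$ is the depth-first ordering. An edge $(v_i,v_j)$ of $\vec G$ is a forward edge if $i<j$ and a back edge if $j<i$. *)

theory Defs
  imports "HOL-Probability.Probability"
begin

definition random_subset :: "'a set \<Rightarrow> real \<Rightarrow> 'a set pmf" where
  "random_subset S p = map_pmf (\<lambda>f. {x\<in>S. f x}) (Pi_pmf S False (\<lambda>_. bernoulli_pmf p))"

definition dir_pairs :: "nat \<Rightarrow> (nat \<times> nat) set" where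
  "dir_pairs n = {(i,j). i \<in> {1..n} \<and> j \<in> {1..n} \<and> i \<noteq> j}"

definition undir_pairs :: "nat \<Rightarrow> nat set set" where
  "undir_pairs n = {{i,j} | i j. i \<in> {1..n} \<and> j \<in> {1..n} \<and> i \<noteq> j}"

definition dGnp :: "nat \<Rightarrow> real \<Rightarrow> (nat \<times> nat) set pmf" where
  "dGnp n p = random_subset (dir_pairs n) p"

definition Gnp :: "nat \<Rightarrow> real \<Rightarrow> nat set set pmf" where
  "Gnp n p = random_subset (undir_pairs n) p"

definition out_nbrs :: "(nat \<times> nat) set \<Rightarrow> nat \<Rightarrow> nat set" where
  "out_nbrs D v = {u. (v,u) \<in> D}"

definition nbrs :: "nat set set \<Rightarrow> nat \<Rightarrow> nat set" where
  "nbrs G v = {u. {v,u} \<in> G}"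

text \<open>State (O_i, A_i): ordered list of open vertices and set of explored vertices.\<close>
definition dfs_step :: "nat \<Rightarrow> (nat \<Rightarrow> nat set) \<Rightarrow> nat list \<times> nat set \<Rightarrow> nat list \<times> nat set" where
  "dfs_step n N st = (let Op = fst st; A = snd st; v = hd Op; A' = insert v A;
      Nv = {u \<in> N v. u \<notin> set Op \<union> A};
      O1 = sorted_list_of_set Nv @ tl Op
    in (if O1 = [] then [Min ({1..n} - A')] else O1, A'))"

definition dfs_state :: "nat \<Rightarrow> (nat \<Rightarrow> nat set) \<Rightarrow> nat \<Rightarrow> nat list \<times> nat set" where
  "dfs_state n N i = (dfs_step n N ^^ i) ([1], {})"

definition dfs_vertex :: "nat \<Rightarrow> (nat \<Rightarrow> nat set) \<Rightarrow> nat \<Rightarrow> nat" where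
  "dfs_vertex n N i = hd (fst (dfs_state n N i))"

definition dfs_new :: "nat \<Rightarrow> (nat \<Rightarrow> nat set) \<Rightarrow> nat \<Rightarrow> nat set" where
  "dfs_new n N i = {u \<in> N (dfs_vertex n N i).
      u \<notin> set (fst (dfs_state n N i)) \<union> snd (dfs_state n N i)}"

definition dfs_forest :: "nat \<Rightarrow> (nat \<Rightarrow> nat set) \<Rightarrow> (nat \<times> nat) set" where
  "dfs_forest n N = {(dfs_vertex n N i, y) | i y. i < n \<and> y \<in> dfs_new n N i}"

abbreviation forest_dir :: "nat \<Rightarrow> (nat \<times> nat) set \<Rightarrow> (nat \<times> nat) set" where
  "forest_dir n D \<equiv> dfs_forest n (out_nbrs D)"

abbreviation forest_undir :: "nat \<Rightarrow> nat set set \<Rightarrow> (nat \<times> nat) set" where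
  "forest_undir n G \<equiv> dfs_forest n (nbrs G)"

definition fwd_graph :: "nat \<Rightarrow> (nat \<times> nat) set \<Rightarrow> nat set set" where
  "fwd_graph n D = {{dfs_vertex n (out_nbrs D) i, dfs_vertex n (out_nbrs D) j} | i j.
      i < j \<and> j < n \<and> (dfs_vertex n (out_nbrs D) i, dfs_vertex n (out_nbrs D) j) \<in> D}"

definition back_pairs :: "nat \<Rightarrow> nat set set \<Rightarrow> (nat \<times> nat) set" where
  "back_pairs n G = {(dfs_vertex n (nbrs G) i, dfs_vertex n (nbrs G) j) | i j. j < i \<and> i < n}"

definition fwd_orient :: "nat \<Rightarrow> nat set set \<Rightarrow> (nat \<times> nat) set" where
  "fwd_orient n G = {(dfs_vertex n (nbrs G) i, dfs_vertex n (nbrs G) j) | i j.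
      i < j \<and> j < n \<and> {dfs_vertex n (nbrs G) i, dfs_vertex n (nbrs G) j} \<in> G}"

definition coupling :: "nat \<Rightarrow> real \<Rightarrow> (nat set set \<times> (nat \<times> nat) set) pmf" where
  "coupling n p = bind_pmf (Gnp n p) (\<lambda>G.
      map_pmf (\<lambda>B. (G, fwd_orient n G \<union> B)) (random_subset (back_pairs n G) p))"

end

theory Submission
  imports Defs
begin



lemma dfs_state_Suc: "dfs_state n N (Suc i) = dfs_step n N (dfs_state n N i)"
  by (simp add: dfs_state_def)

lemma dfs_inv:
  assumes NS: "\<And>v. N v \<subseteq> {1..n}" and "i \<le> n"
  shows "snd (dfs_state n N i) = dfs_vertex n N ` {..<i} \<and> card (snd (dfs_state n N i)) = i
    \<and> snd (dfs_state n N i) \<subseteq> {1..n} \<and> (i < n \<longrightarrow> fst (dfs_state n N i) \<noteq> []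
    \<and> distinct (fst (dfs_state n N i)) \<and> set (fst (dfs_state n N i)) \<subseteq> {1..n}
    \<and> set (fst (dfs_state n N i)) \<inter> snd (dfs_state n N i) = {})"
  using assms(2)
proof (induction i)
  case 0
  then show ?case by (simp add: dfs_state_def)
next
  case (Suc i)
  obtain Op A where st: "dfs_state n N i = (Op, A)" by fastforce
  have IH: "A = dfs_vertex n N ` {..<i}" "card A = i" "A \<subseteq> {1..n}" "Op \<noteq> []" "distinct Op"
     "set Op \<subseteq> {1..n}" "set Op \<inter> A = {}" using Suc by (auto simp: st)
  define v where "v = hd Op"
  have vdef: "dfs_vertex n N i = v" by (simp add: dfs_vertex_def st v_def)
  define Nv where "Nv = {u \<in> N v. u \<notin> set Op \<union> A}"
  define O1 where "O1 = sorted_list_of_set Nv @ tl Op"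
  have step: "dfs_state n N (Suc i) = (if O1 = [] then [Min ({1..n} - insert v A)] else O1, insert v A)"
    by (simp add: dfs_state_Suc st dfs_step_def Let_def v_def Nv_def O1_def)
  have vO: "v \<in> set Op" using IH(4) by (simp add: v_def)
  have vA: "v \<notin> A" using vO IH(7) by auto
  have vn: "v \<in> {1..n}" using vO IH(6) by auto
  have finA: "finite A" using IH(3) by (rule finite_subset) simp
  have A1: "insert v A = dfs_vertex n N ` {..<Suc i}" using IH(1) vdef by (auto simp: lessThan_Suc)
  have A2: "card (insert v A) = Suc i" using vA finA IH(2) by simp
  have A3: "insert v A \<subseteq> {1..n}" using vn IH(3) by auto
  have Nvn: "Nv \<subseteq> {1..n}" using NS[of v] unfolding Nv_def by blast
  have finNv: "finite Nv" using Nvn by (rule finite_subset) simp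
  have vtl: "v \<notin> set (tl Op)" using IH(4,5) by (cases Op) (auto simp: v_def)
  have tlsub: "set (tl Op) \<subseteq> set Op" by (cases Op) auto
  have O1: "distinct O1 \<and> set O1 \<subseteq> {1..n} \<and> set O1 \<inter> insert v A = {}"
    unfolding O1_def using finNv Nvn IH(5,6,7) vtl tlsub vO distinct_tl[OF IH(5)]
    by (auto simp: Nv_def)
  show ?case
  proof (intro conjI impI)
    assume lt: "Suc i < n"
    have ne: "{1..n} - insert v A \<noteq> {}"
    proof
      assume "{1..n} - insert v A = {}"
      then have "{1..n} \<subseteq> insert v A" by blast
      then have "card {1..n} \<le> card (insert v A)" using finA by (intro card_mono) auto
      then show False using A2 lt by simp
    qed
    have M: "Min ({1..n} - insert v A) \<in> {1..n} - insert v A" using ne by (intro Min_in) auto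
    show "fst (dfs_state n N (Suc i)) \<noteq> []" by (simp add: step)
    show "distinct (fst (dfs_state n N (Suc i)))" using O1 by (simp add: step)
    show "set (fst (dfs_state n N (Suc i))) \<subseteq> {1..n}" using O1 M by (auto simp: step)
    show "set (fst (dfs_state n N (Suc i))) \<inter> snd (dfs_state n N (Suc i)) = {}"
      using O1 M by (auto simp: step)
  qed (use A1 A2 A3 in \<open>simp_all add: step\<close>)
qed


lemma dfs_facts:
  assumes NS: "\<And>v. N v \<subseteq> {1..n}"
  shows dfs_bij: "bij_betw (dfs_vertex n N) {..<n} {1..n}"
    and dfs_vO: "\<And>i. i < n \<Longrightarrow> dfs_vertex n N i \<in> set (fst (dfs_state n N i))"
    and dfs_A: "\<And>i. i \<le> n \<Longrightarrow> snd (dfs_state n N i) = dfs_vertex n N ` {..<i}"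
    and dfs_OA: "\<And>i. i < n \<Longrightarrow> set (fst (dfs_state n N i)) \<inter> snd (dfs_state n N i) = {}"
    and dfs_On: "\<And>i. i < n \<Longrightarrow> set (fst (dfs_state n N i)) \<subseteq> {1..n}"
proof -
  note I = dfs_inv[OF NS]
  show vO: "\<And>i. i < n \<Longrightarrow> dfs_vertex n N i \<in> set (fst (dfs_state n N i))"
  proof -
    fix i assume "i < n"
    then have "fst (dfs_state n N i) \<noteq> []" using I[of i] by simp
    then show "dfs_vertex n N i \<in> set (fst (dfs_state n N i))" by (simp add: dfs_vertex_def)
  qed
  show A: "\<And>i. i \<le> n \<Longrightarrow> snd (dfs_state n N i) = dfs_vertex n N ` {..<i}" using I by simp
  show OA: "\<And>i. i < n \<Longrightarrow> set (fst (dfs_state n N i)) \<inter> snd (dfs_state n N i) = {}"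
    using I by (meson less_imp_le)
  show On: "\<And>i. i < n \<Longrightarrow> set (fst (dfs_state n N i)) \<subseteq> {1..n}"
    using I by (meson less_imp_le)
  have nA: "dfs_vertex n N i \<notin> dfs_vertex n N ` {..<i}" if "i < n" for i
    using vO[OF that] OA[OF that] A[of i] that by auto
  have inj: "inj_on (dfs_vertex n N) {..<n}"
  proof (rule inj_onI)
    fix a b assume a: "a \<in> {..<n}" and b: "b \<in> {..<n}" and e: "dfs_vertex n N a = dfs_vertex n N b"
    show "a = b"
    proof (rule ccontr)
      assume "a \<noteq> b"
      then consider "a < b" | "b < a" by linarith
      then show False
      proof cases
        case 1 then show ?thesis using nA[of b] b e by (metis imageI lessThan_iff)
      next
        case 2 then show ?thesis using nA[of a] a e by (metis imageI lessThan_iff)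
      qed
    qed
  qed
  have sub: "dfs_vertex n N ` {..<n} \<subseteq> {1..n}" using vO On by auto
  have "card (dfs_vertex n N ` {..<n}) = card {1..n}" using card_image[OF inj] by simp
  then have "dfs_vertex n N ` {..<n} = {1..n}" using sub by (intro card_subset_eq) auto
  then show "bij_betw (dfs_vertex n N) {..<n} {1..n}" using inj by (simp add: bij_betw_def)
qed


lemma nbrs_sub: "G \<subseteq> undir_pairs n \<Longrightarrow> nbrs G v \<subseteq> {1..n}"
  unfolding nbrs_def undir_pairs_def by (auto simp: doubleton_eq_iff)

lemma out_nbrs_sub: "D \<subseteq> dir_pairs n \<Longrightarrow> out_nbrs D v \<subseteq> {1..n}"
  unfolding out_nbrs_def dir_pairs_def by auto

lemma dfs_key:
  assumes G: "G \<subseteq> undir_pairs n" and B: "B \<subseteq> back_pairs n G" and D: "D = fwd_orient n G \<union> B"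
    and i: "i < n"
  shows "{u \<in> out_nbrs D (dfs_vertex n (nbrs G) i). u \<notin> set (fst (dfs_state n (nbrs G) i)) \<union> snd (dfs_state n (nbrs G) i)}
      = dfs_new n (nbrs G) i"
proof -
  define w where "w = dfs_vertex n (nbrs G)"
  have NS: "\<And>v. nbrs G v \<subseteq> {1..n}" using nbrs_sub[OF G] .
  have bij: "bij_betw w {..<n} {1..n}" using dfs_bij[where N="nbrs G", OF NS] by (simp add: w_def)
  then have inj: "inj_on w {..<n}" by (simp add: bij_betw_def)
  obtain Op A where st: "dfs_state n (nbrs G) i = (Op, A)" by fastforce
  have wO: "w i \<in> set Op" using dfs_vO[where N="nbrs G", OF NS i] by (simp add: w_def st)
  have hd: "hd Op = w i" by (simp add: w_def dfs_vertex_def st)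
  have Aeq: "A = w ` {..<i}" using dfs_A[where N="nbrs G", OF NS, of i] i by (simp add: w_def st)
  have key: "{u \<in> out_nbrs D (hd Op). u \<notin> set Op \<union> A} = {u \<in> nbrs G (hd Op). u \<notin> set Op \<union> A}"
  proof (intro set_eqI iffI)
    fix u assume u: "u \<in> {u \<in> out_nbrs D (hd Op). u \<notin> set Op \<union> A}"
    then have "(w i, u) \<in> fwd_orient n G \<union> B" and uA: "u \<notin> A" and uO: "u \<notin> set Op"
      using D hd by (auto simp: out_nbrs_def)
    then consider "(w i, u) \<in> fwd_orient n G" | "(w i, u) \<in> back_pairs n G" using B by blast
    then show "u \<in> {u \<in> nbrs G (hd Op). u \<notin> set Op \<union> A}"
    proof cases
      case 1
      then obtain a b where ab: "w i = w a" "u = w b" "a < b" "b < n" "{w a, w b} \<in> G"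
        unfolding fwd_orient_def w_def by blast
      have "a = i" using inj_onD[OF inj ab(1)[symmetric]] ab i by simp
      then show ?thesis using ab uA uO hd by (auto simp: nbrs_def)
    next
      case 2
      then obtain a b where ab: "w i = w a" "u = w b" "b < a" "a < n"
        unfolding back_pairs_def w_def by blast
      have "a = i" using inj_onD[OF inj ab(1)[symmetric]] ab i by simp
      then show ?thesis using ab uA Aeq by auto
    qed
  next
    fix u assume u: "u \<in> {u \<in> nbrs G (hd Op). u \<notin> set Op \<union> A}"
    then have e: "{w i, u} \<in> G" and uA: "u \<notin> A" and uO: "u \<notin> set Op"
      using hd by (auto simp: nbrs_def)
    have "u \<in> {1..n}" using NS[of "w i"] e by (auto simp: nbrs_def)
    then obtain b where b: "b < n" "u = w b" using bij by (metis bij_betw_iff_bijections lessThan_iff)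
    have "\<not> b < i" using uA Aeq b by auto
    moreover have "b \<noteq> i" using uO wO b by auto
    ultimately have "i < b" by linarith
    then have "(w i, u) \<in> fwd_orient n G" unfolding fwd_orient_def w_def[symmetric] using b e by blast
    then show "u \<in> {u \<in> out_nbrs D (hd Op). u \<notin> set Op \<union> A}" using D hd u by (auto simp: out_nbrs_def)
  qed
  then show ?thesis by (simp add: dfs_new_def dfs_vertex_def st)
qed

lemma dfs_same:
  assumes G: "G \<subseteq> undir_pairs n" and B: "B \<subseteq> back_pairs n G" and D: "D = fwd_orient n G \<union> B"
  shows "i \<le> n \<Longrightarrow> dfs_state n (out_nbrs D) i = dfs_state n (nbrs G) i"
proof (induction i)
  case 0
  then show ?case by (simp add: dfs_state_def)
next
  case (Suc i)
  have i: "i < n" using Suc by simp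
  obtain Op A where st: "dfs_state n (nbrs G) i = (Op, A)" by fastforce
  have key: "{u \<in> out_nbrs D (hd Op). u \<notin> set Op \<union> A} = {u \<in> nbrs G (hd Op). u \<notin> set Op \<union> A}"
    using dfs_key[OF G B D i] by (simp add: dfs_new_def dfs_vertex_def st)
  have "dfs_state n (out_nbrs D) (Suc i) = dfs_step n (out_nbrs D) (Op, A)"
    using Suc i by (simp add: dfs_state_Suc st)
  also have "\<dots> = dfs_step n (nbrs G) (Op, A)"
    unfolding dfs_step_def Let_def using key by simp
  also have "\<dots> = dfs_state n (nbrs G) (Suc i)" by (simp add: dfs_state_Suc st)
  finally show ?case .
qed

lemma bij_inv_pt:
  assumes "bij_betw w {..<n} {1..n}" "x \<in> {1..(n::nat)}"
  obtains a where "a < n" "x = w a"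
  using assms by (metis bij_betw_iff_bijections lessThan_iff)

lemma undir_elem:
  assumes bij: "bij_betw w {..<(n::nat)} {1..n}" and e: "e \<in> undir_pairs n"
  obtains a b where "a < b" "b < n" "e = {w a, w b}"
proof -
  obtain x y where xy: "e = {x,y}" "x \<in> {1..n}" "y \<in> {1..n}" "x \<noteq> y"
    using e unfolding undir_pairs_def by blast
  obtain a where a: "a < n" "x = w a" using bij_inv_pt[OF bij xy(2)] by blast
  obtain b where b: "b < n" "y = w b" using bij_inv_pt[OF bij xy(3)] by blast
  have "a \<noteq> b" using a b xy by auto
  then consider "a < b" | "b < a" by linarith
  then show ?thesis
  proof cases
    case 1 then show ?thesis using that[of a b] a b xy by auto
  next
    case 2 then show ?thesis using that[of b a] a b xy by (auto simp: insert_commute)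
  qed
qed

lemma doubleton_inj:
  assumes bij: "bij_betw w {..<(n::nat)} {1..n}"
    and "i < n" "j < n" "k < n" "l < n" "i \<noteq> j" "k \<noteq> l" "(i < j) = (k < l)"
    and "{w i, w j} = {w k, w l}"
  shows "i = k \<and> j = l"
proof -
  have inj: "inj_on w {..<n}" using bij by (simp add: bij_betw_def)
  from assms(9) consider "w i = w k \<and> w j = w l" | "w i = w l \<and> w j = w k"
    by (auto simp: doubleton_eq_iff)
  then show ?thesis
  proof cases
    case 1 then show ?thesis using inj_onD[OF inj] assms(2-5) by auto
  next
    case 2
    then have "i = l" "j = k" using inj_onD[OF inj] assms(2-5) by auto
    then have "(l < k) = (k < l)" "k \<noteq> l" using assms(7,8) by auto
    then have False by linarith
    then show ?thesis ..
  qed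
qed

lemma fo_bij:
  assumes bij: "bij_betw w {..<(n::nat)} {1..n}" and G: "G \<subseteq> undir_pairs n"
  shows "bij_betw (\<lambda>(x,y). {x,y}) {(w i, w j) | i j. i < j \<and> j < n \<and> {w i, w j} \<in> G} G"
  unfolding bij_betw_def
proof
  show "inj_on (\<lambda>(x,y). {x,y}) {(w i, w j) | i j. i < j \<and> j < n \<and> {w i, w j} \<in> G}"
  proof (rule inj_onI, clarsimp)
    fix i j k l assume "i < j" "j < n" "k < l" "l < n" "{w i, w j} = {w k, w l}"
    then show "w i = w k \<and> w j = w l" using doubleton_inj[OF bij, of i j k l] by auto
  qed
  show "(\<lambda>(x,y). {x,y}) ` {(w i, w j) | i j. i < j \<and> j < n \<and> {w i, w j} \<in> G} = G"
  proof (intro set_eqI iffI)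
    fix e assume "e \<in> (\<lambda>(x,y). {x,y}) ` {(w i, w j) | i j. i < j \<and> j < n \<and> {w i, w j} \<in> G}"
    then show "e \<in> G" by auto
  next
    fix e assume e: "e \<in> G"
    then obtain a b where ab: "a < b" "b < n" "e = {w a, w b}" using undir_elem[OF bij] G by blast
    then show "e \<in> (\<lambda>(x,y). {x,y}) ` {(w i, w j) | i j. i < j \<and> j < n \<and> {w i, w j} \<in> G}"
      using e by (intro image_eqI[of _ _ "(w a, w b)"]) auto
  qed
qed

lemma bp_bij:
  assumes bij: "bij_betw w {..<(n::nat)} {1..n}"
  shows "bij_betw (\<lambda>(x,y). {x,y}) {(w i, w j) | i j. j < i \<and> i < n} (undir_pairs n)"
  unfolding bij_betw_def
proof
  show "inj_on (\<lambda>(x,y). {x,y}) {(w i, w j) | i j. j < i \<and> i < n}"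
  proof (rule inj_onI, clarsimp)
    fix i j k l assume "j < i" "i < n" "l < k" "k < n" "{w i, w j} = {w k, w l}"
    then show "w i = w k \<and> w j = w l" using doubleton_inj[OF bij, of i j k l] by auto
  qed
  show "(\<lambda>(x,y). {x,y}) ` {(w i, w j) | i j. j < i \<and> i < n} = undir_pairs n"
  proof (intro set_eqI iffI)
    fix e assume "e \<in> (\<lambda>(x,y). {x,y}) ` {(w i, w j) | i j. j < i \<and> i < n}"
    then obtain i j where "j < i" "i < n" "e = {w i, w j}" by auto
    moreover have "w i \<in> {1..n}" "w j \<in> {1..n}" "w i \<noteq> w j"
      using bij calculation unfolding bij_betw_def inj_on_def by (auto, (metis lessThan_iff order.strict_trans less_irrefl)+)
    ultimately show "e \<in> undir_pairs n" unfolding undir_pairs_def by blast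
  next
    fix e assume e: "e \<in> undir_pairs n"
    then obtain a b where ab: "a < b" "b < n" "e = {w a, w b}" using undir_elem[OF bij] by blast
    then show "e \<in> (\<lambda>(x,y). {x,y}) ` {(w i, w j) | i j. j < i \<and> i < n}"
      by (intro image_eqI[of _ _ "(w b, w a)"]) (auto simp: insert_commute)
  qed
qed

lemma dir_split:
  assumes bij: "bij_betw w {..<(n::nat)} {1..n}"
  shows "dir_pairs n = {(w i, w j) | i j. j < i \<and> i < n} \<union> prod.swap ` {(w i, w j) | i j. j < i \<and> i < n}"
    and "{(w i, w j) | i j. j < i \<and> i < n} \<inter> prod.swap ` {(w i, w j) | i j. j < i \<and> i < n} = {}"
proof -
  have inj: "inj_on w {..<n}" and im: "w ` {..<n} = {1..n}" using bij by (auto simp: bij_betw_def)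
  show "dir_pairs n = {(w i, w j) | i j. j < i \<and> i < n} \<union> prod.swap ` {(w i, w j) | i j. j < i \<and> i < n}"
  proof (intro set_eqI iffI)
    fix z assume "z \<in> dir_pairs n"
    then obtain x y where z: "z = (x,y)" "x \<in> {1..n}" "y \<in> {1..n}" "x \<noteq> y" unfolding dir_pairs_def by blast
    obtain a where a: "a < n" "x = w a" using bij_inv_pt[OF bij z(2)] by blast
    obtain b where b: "b < n" "y = w b" using bij_inv_pt[OF bij z(3)] by blast
    have "a \<noteq> b" using a b z by auto
    then consider "b < a" | "a < b" by linarith
    then show "z \<in> {(w i, w j) | i j. j < i \<and> i < n} \<union> prod.swap ` {(w i, w j) | i j. j < i \<and> i < n}"
    proof cases
      case 1 then show ?thesis using a b z by blast
    next
      case 2 then have "z = prod.swap (w b, w a)" using a b z by simp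
      then show ?thesis using 2 b by blast
    qed
  next
    fix z assume "z \<in> {(w i, w j) | i j. j < i \<and> i < n} \<union> prod.swap ` {(w i, w j) | i j. j < i \<and> i < n}"
    then obtain i j where "j < i" "i < n" "z = (w i, w j) \<or> z = (w j, w i)" by auto
    moreover have "w i \<in> {1..n}" "w j \<in> {1..n}" "w i \<noteq> w j"
      using inj im calculation unfolding inj_on_def by (auto, (metis lessThan_iff order.strict_trans less_irrefl)+)
    ultimately show "z \<in> dir_pairs n" unfolding dir_pairs_def by auto
  qed
  show "{(w i, w j) | i j. j < i \<and> i < n} \<inter> prod.swap ` {(w i, w j) | i j. j < i \<and> i < n} = {}"
  proof (rule ccontr)
    assume "{(w i, w j) | i j. j < i \<and> i < n} \<inter> prod.swap ` {(w i, w j) | i j. j < i \<and> i < n} \<noteq> {}"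
    then obtain i j k l where "j < i" "i < n" "l < k" "k < n" "w i = w l" "w j = w k" by auto
    then show False using inj_onD[OF inj, of i l] inj_onD[OF inj, of j k] by auto
  qed
qed


lemma finite_dir_pairs: "finite (dir_pairs n)"
  by (rule finite_subset[of _ "{1..n} \<times> {1..n}"]) (auto simp: dir_pairs_def)

lemma finite_undir_pairs: "finite (undir_pairs n)"
  by (rule finite_subset[of _ "Pow {1..n}"]) (auto simp: undir_pairs_def)

lemma coupling_struct:
  assumes G: "G \<subseteq> undir_pairs n" and B: "B \<subseteq> back_pairs n G" and D: "D = fwd_orient n G \<union> B"
  shows "forest_dir n D = forest_undir n G"
    and "fwd_graph n D = G"
    and "card (fwd_orient n G) = card G"
    and "fwd_orient n G \<inter> B = {}"
    and "D \<subseteq> dir_pairs n"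
    and "card (back_pairs n G) = card (undir_pairs n)"
    and "card (dir_pairs n) = 2 * card (undir_pairs n)"
proof -
  define w where "w = dfs_vertex n (nbrs G)"
  have NS: "\<And>v. nbrs G v \<subseteq> {1..n}" using nbrs_sub[OF G] .
  have bij: "bij_betw w {..<n} {1..n}" using dfs_bij[where N="nbrs G", OF NS] by (simp add: w_def)
  then have inj: "inj_on w {..<n}" by (simp add: bij_betw_def)
  have FO: "fwd_orient n G = {(w i, w j) | i j. i < j \<and> j < n \<and> {w i, w j} \<in> G}"
    by (simp add: fwd_orient_def w_def)
  have BP: "back_pairs n G = {(w i, w j) | i j. j < i \<and> i < n}"
    by (simp add: back_pairs_def w_def)
  have vD: "dfs_vertex n (out_nbrs D) i = w i" if "i < n" for i
    using dfs_same[OF G B D, of i] that by (simp add: dfs_vertex_def w_def)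
  have nD: "dfs_new n (out_nbrs D) i = dfs_new n (nbrs G) i" if "i < n" for i
    using dfs_same[OF G B D, of i] dfs_key[OF G B D that] vD[OF that] that
    by (simp add: dfs_new_def w_def)
  show "forest_dir n D = forest_undir n G"
    unfolding dfs_forest_def using vD nD by (auto simp: w_def) (metis)+
  have "fwd_graph n D = {{w i, w j} | i j. i < j \<and> j < n \<and> (w i, w j) \<in> D}"
    unfolding fwd_graph_def using vD by (auto, (metis order.strict_trans)+)
  also have "\<dots> = G"
  proof (intro set_eqI iffI)
    fix e assume "e \<in> {{w i, w j} | i j. i < j \<and> j < n \<and> (w i, w j) \<in> D}"
    then obtain i j where ij: "e = {w i, w j}" "i < j" "j < n" "(w i, w j) \<in> D" by blast
    then consider "(w i, w j) \<in> fwd_orient n G" | "(w i, w j) \<in> back_pairs n G" using D B by blast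
    then show "e \<in> G"
    proof cases
      case 1 then show ?thesis using ij unfolding FO by auto
    next
      case 2
      then obtain a b where "w i = w a" "w j = w b" "b < a" "a < n" unfolding BP by blast
      then have "i = a" "j = b" using inj_onD[OF inj] ij by auto
      then show ?thesis using ij \<open>b < a\<close> by simp
    qed
  next
    fix e assume e: "e \<in> G"
    then obtain a b where ab: "a < b" "b < n" "e = {w a, w b}" using undir_elem[OF bij] G by blast
    then have "(w a, w b) \<in> D" using D e unfolding FO by blast
    then show "e \<in> {{w i, w j} | i j. i < j \<and> j < n \<and> (w i, w j) \<in> D}" using ab by blast
  qed
  finally show "fwd_graph n D = G" .
  show "card (fwd_orient n G) = card G" unfolding FO using bij_betw_same_card[OF fo_bij[OF bij G]] .
  show "fwd_orient n G \<inter> B = {}"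
  proof (rule ccontr)
    assume "fwd_orient n G \<inter> B \<noteq> {}"
    then obtain a b c d where "(w a, w b) = (w c, w d)" "a < b" "b < n" "d < c" "c < n"
      using B unfolding FO BP by blast
    then show False using inj_onD[OF inj, of a c] inj_onD[OF inj, of b d] by auto
  qed
  note DS = dir_split[OF bij]
  have "fwd_orient n G \<subseteq> prod.swap ` {(w i, w j) | i j. j < i \<and> i < n}"
    unfolding FO by force
  then show "D \<subseteq> dir_pairs n" using D B DS(1) unfolding BP by blast
  show CB: "card (back_pairs n G) = card (undir_pairs n)" unfolding BP using bij_betw_same_card[OF bp_bij[OF bij]] .
  have fin: "finite {(w i, w j) | i j. j < i \<and> i < n}"
    using finite_subset[OF _ finite_dir_pairs] DS(1) by blast
  have "card (dir_pairs n) = card {(w i, w j) | i j. j < i \<and> i < n} + card (prod.swap ` {(w i, w j) | i j. j < i \<and> i < n})"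
    using DS fin by (simp add: card_Un_disjoint)
  also have "\<dots> = 2 * card (back_pairs n G)" unfolding BP by (simp add: card_image)
  finally show "card (dir_pairs n) = 2 * card (undir_pairs n)" using CB by simp
qed



lemma set_rs: "finite S \<Longrightarrow> set_pmf (random_subset S p) \<subseteq> Pow S"
  unfolding random_subset_def by auto

lemma pmf_rs:
  assumes S: "finite S" and X: "X \<subseteq> S" and p: "0 \<le> p" "p \<le> 1"
  shows "pmf (random_subset S p) X = p ^ card X * (1 - p) ^ (card S - card X)"
proof -
  define M where "M = Pi_pmf S False (\<lambda>_. bernoulli_pmf p)"
  define g where "g = (\<lambda>f. {x\<in>S. f x})"
  define c where "c = (\<lambda>x. x \<in> X)"
  have "pmf (random_subset S p) X = measure M (g -` {X})"
    unfolding random_subset_def M_def g_def by (simp add: pmf_map)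
  also have "\<dots> = measure M (g -` {X} \<inter> set_pmf M)" by (simp add: measure_Int_set_pmf)
  also have "g -` {X} \<inter> set_pmf M = {c} \<inter> set_pmf M"
  proof (intro set_eqI iffI)
    fix f assume f: "f \<in> g -` {X} \<inter> set_pmf M"
    then have "\<forall>x. x \<notin> S \<longrightarrow> f x = False" using set_Pi_pmf_subset[OF S, of False "\<lambda>_. bernoulli_pmf p"] unfolding M_def by auto
    moreover have "{x\<in>S. f x} = X" using f by (simp add: g_def)
    ultimately have "f = c" using X unfolding c_def by (auto intro!: ext)
    then show "f \<in> {c} \<inter> set_pmf M" using f by simp
  next
    fix f assume "f \<in> {c} \<inter> set_pmf M"
    then show "f \<in> g -` {X} \<inter> set_pmf M" using X by (auto simp: g_def c_def)
  qed
  also have "measure M ({c} \<inter> set_pmf M) = pmf M c" by (simp add: measure_Int_set_pmf measure_pmf_single)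
  also have "pmf M c = (\<Prod>x\<in>S. pmf (bernoulli_pmf p) (c x))"
    unfolding M_def using X by (intro pmf_Pi') (auto simp: S c_def)
  also have "\<dots> = (\<Prod>x\<in>S - X. pmf (bernoulli_pmf p) (c x)) * (\<Prod>x\<in>X. pmf (bernoulli_pmf p) (c x))"
    using prod.subset_diff[OF X S] .
  also have "\<dots> = (\<Prod>x\<in>S - X. (1 - p)) * (\<Prod>x\<in>X. p)"
    using p by (intro arg_cong2[where f="(*)"] prod.cong) (auto simp: c_def)
  also have "\<dots> = p ^ card X * (1 - p) ^ (card S - card X)"
    using X S by (simp add: card_Diff_subset finite_subset)
  finally show ?thesis .
qed

lemma pmf_eq_from_support:
  fixes r q :: "'a pmf"
  assumes fin: "finite (set_pmf r)" and eq: "\<And>x. x \<in> set_pmf r \<Longrightarrow> pmf r x = pmf q x"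
  shows "r = q"
proof -
  have "measure q (set_pmf r) = (\<Sum>x\<in>set_pmf r. pmf q x)"
    using fin by (simp add: measure_measure_pmf_finite)
  also have "\<dots> = (\<Sum>x\<in>set_pmf r. pmf r x)" using eq by simp
  also have "\<dots> = measure r (set_pmf r)" using fin by (simp add: measure_measure_pmf_finite)
  also have "\<dots> = 1" using measure_Int_set_pmf[of r UNIV] by simp
  finally have m1: "measure q (set_pmf r) = 1" .
  have "set_pmf q \<subseteq> set_pmf r"
  proof
    fix x assume xq: "x \<in> set_pmf q"
    show "x \<in> set_pmf r"
    proof (rule ccontr)
      assume xr: "x \<notin> set_pmf r"
      have "measure q (insert x (set_pmf r)) = pmf q x + measure q (set_pmf r)"
        using xr fin by (simp add: measure_measure_pmf_finite)
      also have "\<dots> > 1" using m1 xq by (simp add: pmf_positive)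
      finally show False using measure_pmf.prob_le_1[of q "insert x (set_pmf r)"] by simp
    qed
  qed
  show ?thesis
  proof (rule pmf_eqI)
    fix x show "pmf r x = pmf q x"
    proof (cases "x \<in> set_pmf r")
      case True then show ?thesis using eq by simp
    next
      case False
      then have "x \<notin> set_pmf q" using \<open>set_pmf q \<subseteq> set_pmf r\<close> by blast
      then show ?thesis using False by (simp add: set_pmf_eq)
    qed
  qed
qed




lemma coupling_support:
  assumes "y \<in> set_pmf (coupling n p)"
  obtains G B where "y = (G, fwd_orient n G \<union> B)" "G \<in> set_pmf (Gnp n p)"
    "G \<subseteq> undir_pairs n" "B \<subseteq> back_pairs n G"
proof -
  obtain G B where "G \<in> set_pmf (Gnp n p)" "B \<in> set_pmf (random_subset (back_pairs n G) p)"
    "y = (G, fwd_orient n G \<union> B)" using assms unfolding coupling_def by auto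
  moreover have "G \<subseteq> undir_pairs n"
    using calculation(1) set_rs[OF finite_undir_pairs, of n p] unfolding Gnp_def by blast
  moreover have "finite (back_pairs n G)"
    using coupling_struct(5)[OF \<open>G \<subseteq> undir_pairs n\<close> order.refl refl]
    by (intro finite_subset[OF _ finite_dir_pairs]) auto
  moreover have "B \<subseteq> back_pairs n G"
    using calculation(2) set_rs[OF \<open>finite (back_pairs n G)\<close>, of p] by blast
  ultimately show ?thesis using that by blast
qed

theorem proposition2p1:
  fixes n :: nat and p :: real
  assumes "0 \<le> p" and "p \<le> 1"
  shows "map_pmf (forest_dir n) (dGnp n p) = map_pmf (forest_undir n) (Gnp n p)
         \<and> map_pmf (fwd_graph n) (dGnp n p) = Gnp n p
         \<and> (map_pmf fst (coupling n p) = Gnp n p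
            \<and> map_pmf snd (coupling n p) = dGnp n p
            \<and> (\<forall>GD \<in> set_pmf (coupling n p). fwd_graph n (snd GD) = fst GD))"
proof -
  define C where "C = coupling n p"
  have fstC: "map_pmf fst C = Gnp n p"
    unfolding C_def coupling_def by (simp add: map_bind_pmf map_pmf_comp bind_return_pmf')
  have supp: "\<forall>GD \<in> set_pmf C. fwd_graph n (snd GD) = fst GD"
  proof
    fix GD assume "GD \<in> set_pmf C"
    then obtain G B where "GD = (G, fwd_orient n G \<union> B)" "G \<subseteq> undir_pairs n" "B \<subseteq> back_pairs n G"
      using coupling_support unfolding C_def by metis
    then show "fwd_graph n (snd GD) = fst GD" using coupling_struct(2) by simp
  qed
  have forestC: "\<forall>GD \<in> set_pmf C. forest_dir n (snd GD) = forest_undir n (fst GD)"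
  proof
    fix GD assume "GD \<in> set_pmf C"
    then obtain G B where "GD = (G, fwd_orient n G \<union> B)" "G \<subseteq> undir_pairs n" "B \<subseteq> back_pairs n G"
      using coupling_support unfolding C_def by metis
    then show "forest_dir n (snd GD) = forest_undir n (fst GD)" using coupling_struct(1) by simp
  qed
  have sndC: "map_pmf snd C = dGnp n p"
  proof (rule pmf_eq_from_support)
    have "set_pmf (map_pmf snd C) \<subseteq> Pow (dir_pairs n)"
    proof
      fix x assume "x \<in> set_pmf (map_pmf snd C)"
      then obtain GD where "GD \<in> set_pmf C" "x = snd GD" by auto
      then obtain G B where "GD = (G, fwd_orient n G \<union> B)" "G \<subseteq> undir_pairs n" "B \<subseteq> back_pairs n G"
        using coupling_support unfolding C_def by metis
      then show "x \<in> Pow (dir_pairs n)" using coupling_struct(5) \<open>x = snd GD\<close> by simp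
    qed
    then show "finite (set_pmf (map_pmf snd C))"
      by (rule finite_subset) (simp add: finite_dir_pairs)
  next
    fix x assume "x \<in> set_pmf (map_pmf snd C)"
    then obtain GD where GD: "GD \<in> set_pmf C" "x = snd GD" by auto
    then obtain G B where GB: "GD = (G, fwd_orient n G \<union> B)" "G \<in> set_pmf (Gnp n p)"
      "G \<subseteq> undir_pairs n" "B \<subseteq> back_pairs n G"
      using coupling_support unfolding C_def by metis
    note cs = coupling_struct[OF GB(3) GB(4) refl]
    define U where "U = card (undir_pairs n)"
    have finBP: "finite (back_pairs n G)"
      using coupling_struct(5)[OF GB(3) order.refl refl] by (intro finite_subset[OF _ finite_dir_pairs]) auto
    have finB: "finite B" using GB(4) finBP by (rule finite_subset)
    have finFO: "finite (fwd_orient n G)" using cs(5) by (intro finite_subset[OF _ finite_dir_pairs]) auto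
    have gU: "card G \<le> U" unfolding U_def using GB(3) finite_undir_pairs by (rule card_mono[rotated])
    have bU: "card B \<le> U" using card_mono[OF finBP GB(4)] cs(6) U_def by simp
    have inj1: "inj_on snd (set_pmf C)"
    proof (rule inj_onI)
      fix a b assume "a \<in> set_pmf C" "b \<in> set_pmf C" "snd a = snd b"
      then show "a = b" using supp by (metis prod.expand)
    qed
    have "pmf (map_pmf snd C) x = pmf C GD" using GD pmf_map_inj[OF inj1] by simp
    also have "\<dots> = (\<integral>G'. pmf (map_pmf (\<lambda>B. (G', fwd_orient n G' \<union> B)) (random_subset (back_pairs n G') p)) GD \<partial>measure_pmf (Gnp n p))"
      unfolding C_def coupling_def pmf_bind ..
    also have "\<dots> = (\<Sum>a\<in>{G}. pmf (Gnp n p) a *\<^sub>R pmf (map_pmf (\<lambda>B. (a, fwd_orient n a \<union> B)) (random_subset (back_pairs n a) p)) GD)"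
    proof (rule integral_measure_pmf)
      fix a assume "a \<in> set_pmf (Gnp n p)" "pmf (map_pmf (\<lambda>B. (a, fwd_orient n a \<union> B)) (random_subset (back_pairs n a) p)) GD \<noteq> 0"
      then have "GD \<in> set_pmf (map_pmf (\<lambda>B. (a, fwd_orient n a \<union> B)) (random_subset (back_pairs n a) p))"
        by (simp add: set_pmf_eq)
      then show "a \<in> {G}" using GB(1) by auto
    qed simp
    also have "\<dots> = pmf (Gnp n p) G * pmf (map_pmf (\<lambda>B. (G, fwd_orient n G \<union> B)) (random_subset (back_pairs n G) p)) GD"
      by simp
    also have "pmf (map_pmf (\<lambda>B. (G, fwd_orient n G \<union> B)) (random_subset (back_pairs n G) p)) GD
        = pmf (random_subset (back_pairs n G) p) B"
    proof (cases "B \<in> set_pmf (random_subset (back_pairs n G) p)")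
      case True
      have inj2: "inj_on (\<lambda>B. (G, fwd_orient n G \<union> B)) (set_pmf (random_subset (back_pairs n G) p))"
      proof (rule inj_onI)
        fix B1 B2 assume B1: "B1 \<in> set_pmf (random_subset (back_pairs n G) p)"
          and B2: "B2 \<in> set_pmf (random_subset (back_pairs n G) p)"
          and e: "(G, fwd_orient n G \<union> B1) = (G, fwd_orient n G \<union> B2)"
        have "B1 \<subseteq> back_pairs n G" "B2 \<subseteq> back_pairs n G"
          using B1 B2 set_rs[OF finBP, of p] by blast+
        then have "fwd_orient n G \<inter> B1 = {}" "fwd_orient n G \<inter> B2 = {}"
          using coupling_struct(4)[OF GB(3) _ refl] by blast+
        then show "B1 = B2" using e by blast
      qed
      show ?thesis using pmf_map_inj[OF inj2 True] GB(1) by simp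
    next
      case False
      then have "pmf (random_subset (back_pairs n G) p) B = 0" by (simp add: set_pmf_eq)
      moreover have "GD \<notin> set_pmf (map_pmf (\<lambda>B. (G, fwd_orient n G \<union> B)) (random_subset (back_pairs n G) p))"
      proof
        assume "GD \<in> set_pmf (map_pmf (\<lambda>B. (G, fwd_orient n G \<union> B)) (random_subset (back_pairs n G) p))"
        then obtain B' where B': "B' \<in> set_pmf (random_subset (back_pairs n G) p)" "GD = (G, fwd_orient n G \<union> B')" by auto
        have "B' \<subseteq> back_pairs n G" using B' set_rs[OF finBP, of p] by blast
        then have "fwd_orient n G \<inter> B' = {}" using coupling_struct(4)[OF GB(3) _ refl] by blast
        moreover have "fwd_orient n G \<inter> B = {}" using cs(4) .
        ultimately have "B' = B" using B'(2) GB(1) by blast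
        then show False using False B' by simp
      qed
      ultimately show ?thesis by (simp add: set_pmf_eq)
    qed
    also have "pmf (Gnp n p) G = p ^ card G * (1 - p) ^ (U - card G)"
      unfolding Gnp_def U_def using pmf_rs[OF finite_undir_pairs GB(3) assms] .
    also have "pmf (random_subset (back_pairs n G) p) B = p ^ card B * (1 - p) ^ (U - card B)"
      using pmf_rs[OF finBP GB(4) assms] cs(6) U_def by simp
    also have "pmf (dGnp n p) x = p ^ card x * (1 - p) ^ (2 * U - card x)"
      unfolding dGnp_def U_def using pmf_rs[OF finite_dir_pairs _ assms, of x] cs(5,7) GD(2) GB(1) by simp
    moreover have "card x = card G + card B"
      using GD(2) GB(1) card_Un_disjoint[OF finFO finB cs(4)] cs(3) by simp
    moreover have "2 * U - (card G + card B) = (U - card G) + (U - card B)" using gU bU by simp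
    ultimately show "pmf (map_pmf snd C) x = pmf (dGnp n p) x"
      by (simp add: power_add algebra_simps)
  qed
  have "map_pmf (forest_dir n) (dGnp n p) = map_pmf (forest_dir n \<circ> snd) C"
    by (simp add: sndC[symmetric] pmf.map_comp)
  also have "\<dots> = map_pmf (forest_undir n \<circ> fst) C"
    using forestC by (intro map_pmf_cong) auto
  also have "\<dots> = map_pmf (forest_undir n) (Gnp n p)"
    by (simp add: fstC[symmetric] pmf.map_comp)
  finally have i: "map_pmf (forest_dir n) (dGnp n p) = map_pmf (forest_undir n) (Gnp n p)" .
  have "map_pmf (fwd_graph n) (dGnp n p) = map_pmf (fwd_graph n \<circ> snd) C"
    by (simp add: sndC[symmetric] pmf.map_comp)
  also have "\<dots> = map_pmf fst C"
    using supp by (intro map_pmf_cong) auto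
  finally have ii: "map_pmf (fwd_graph n) (dGnp n p) = Gnp n p" using fstC by simp
  show ?thesis using i ii fstC sndC supp unfolding C_def by simp
qed

end
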